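(* Let $H$, $L$ be as in the context and let $(S,\mathcal T_0)$ be a feasible solution, with associated layers $\mathcal T_0,\dots,\mathcal T_{L-1}$. Let $k$ be an integer with $1\le k\le L-1$, and let $H^{(S,k)}=H+\phi^{S}(H)+\phi^{2S}(H)+\cdots+\phi^{(k-1)S}(H)$ (sum of integer matrices). Then $d(S,\mathcal T_0)\ge k$ if and only if $H^{(S,k)}_{\mathcal T_0}$ is a binary matrix (all entries in $\{0,1\}$) and $\omega\big(H^{(S,k)}_{\mathcal T_0}\big)=1$.
   Context: Notation: for a nonnegative integer $n$, $[n)=\{0,1,\dots,n-1\}$. Let $M,N,Z$ be positive integers and let $H$ be a binary $MZ\times NZ$ matrix made of $M\times N$ blocks $H_{m,n}$ ($m\in[M)$, $n\in[N)$), each of which is a $Z\times Z$ circulant (row $i$ of the block is the cyclic right shift by $i$ of its row $0$). Assume $H$ has no zero row and no two identical rows. Rows of $H$ are indexed by $[MZ)$, columns by $[NZ)$. For a vector $x=(x_0,\dots,x_{Z-1})$ and an integer $s$, $\lambda^s(x)=(x_{(-s)\bmod Z},x_{(1-s)\bmod Z},\dots,x_{(Z-1-s)\bmod Z})$. For a row vector $y$ of length $NZ$ split into $N$ consecutive pieces $y^{(0)},\dots,y^{(N-1)}$ of length $Z$, $\phi^s(y)=(\lambda^s(y^{(0)}),\dots,\lambda^s(y^{(N-1)}))$; for a matrix $A$ with $NZ$ columns, $\phi^s(A)$ applies $\phi^s$ to every row. For an ordered subset $\mathcal A\subseteq[MZ)$, $A_{\mathcal A}$ denotes the matrix formed, in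 order, by the rows of a matrix $A$ with indices in $\mathcal A$. For a matrix $A$, $\omega_j(A)$ is the Hamming weight of column $j$ and $\omega(A)=\max_j\omega_j(A)$ (with $\omega$ of the empty matrix equal to $0$). Fix an integer $L>1$. A feasible solution is a pair $(S,\mathcal T_0)$ with $S$ a positive integer and $\mathcal T_0$ an ordered subset of $[MZ)$ such that there exist ordered subsets $\mathcal T_1,\dots,\mathcal T_{L-1}$ of $[MZ)$ with $\mathcal T_0,\dots,\mathcal T_{L-1}$ pairwise disjoint, $\bigcup_{l\in[L)}\mathcal T_l=[MZ)$, and $H_{\mathcal T_l}=\phi^{lS}(H_{\mathcal T_0})$ for all $l\in[L)$. The layer distance $d(S,\mathcal T_0)$ is the largest $l\in[L)$ such that the matrix obtained by stacking $H_{\mathcal T_0},H_{\mathcal T_1},\dots,H_{\mathcal T_{l-1}}$ vertically has maximum column weight at most $1$ (for $l=0$ the stack is empty with weight $0$). *)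

theory Defs
  imports Main
begin

text \<open>Matrices are functions nat => nat => int (row index, column index);
  the dimensions are carried separately.\<close>

definition qc_matrix :: "nat \<Rightarrow> nat \<Rightarrow> nat \<Rightarrow> (nat \<Rightarrow> nat \<Rightarrow> int) \<Rightarrow> bool" where
  "qc_matrix M N Z H \<longleftrightarrow>
     (\<forall>i<M*Z. \<forall>j<N*Z. H i j \<in> {0,1}) \<and>
     (\<forall>m<M. \<forall>n<N. \<forall>i<Z. \<forall>j<Z.
        H (m*Z+i) (n*Z+j) = H (m*Z) (n*Z + nat ((int j - int i) mod int Z))) \<and>
     (\<forall>i<M*Z. \<exists>j<N*Z. H i j \<noteq> 0) \<and>
     (\<forall>i<M*Z. \<forall>i'<M*Z. i \<noteq> i' \<longrightarrow> (\<exists>j<N*Z. H i j \<noteq> H i' j))"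

definition phi :: "nat \<Rightarrow> int \<Rightarrow> (nat \<Rightarrow> nat \<Rightarrow> int) \<Rightarrow> (nat \<Rightarrow> nat \<Rightarrow> int)" where
  "phi Z s A = (\<lambda>i c. A i ((c div Z) * Z + nat ((int (c mod Z) - s) mod int Z)))"

definition rows_sub :: "(nat \<Rightarrow> nat \<Rightarrow> int) \<Rightarrow> nat list \<Rightarrow> (nat \<Rightarrow> nat \<Rightarrow> int)" where
  "rows_sub A xs = (\<lambda>r c. A (xs ! r) c)"

definition col_weight :: "(nat \<Rightarrow> nat \<Rightarrow> int) \<Rightarrow> nat \<Rightarrow> nat \<Rightarrow> nat" where
  "col_weight A nr j = card {i. i < nr \<and> A i j \<noteq> 0}"

definition omega :: "(nat \<Rightarrow> nat \<Rightarrow> int) \<Rightarrow> nat \<Rightarrow> nat \<Rightarrow> nat" where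
  "omega A nr nc = Max ({0} \<union> {col_weight A nr j | j. j < nc})"

definition ordered_subset :: "nat \<Rightarrow> nat list \<Rightarrow> bool" where
  "ordered_subset n xs \<longleftrightarrow> distinct xs \<and> set xs \<subseteq> {..<n}"

definition is_layers :: "nat \<Rightarrow> nat \<Rightarrow> nat \<Rightarrow> nat \<Rightarrow> (nat \<Rightarrow> nat \<Rightarrow> int) \<Rightarrow> nat \<Rightarrow> nat list
    \<Rightarrow> (nat \<Rightarrow> nat list) \<Rightarrow> bool" where
  "is_layers M N Z L H S T0 T \<longleftrightarrow>
     T 0 = T0 \<and>
     (\<forall>l<L. ordered_subset (M*Z) (T l)) \<and>
     (\<forall>l<L. \<forall>l'<L. l \<noteq> l' \<longrightarrow> set (T l) \<inter> set (T l') = {}) \<and>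
     (\<Union>l<L. set (T l)) = {..<M*Z} \<and>
     (\<forall>l<L. length (T l) = length T0 \<and>
        (\<forall>r<length T0. \<forall>c<N*Z.
           rows_sub H (T l) r c = phi Z (int (l*S)) (rows_sub H T0) r c))"

definition feasible :: "nat \<Rightarrow> nat \<Rightarrow> nat \<Rightarrow> nat \<Rightarrow> (nat \<Rightarrow> nat \<Rightarrow> int) \<Rightarrow> nat \<Rightarrow> nat list \<Rightarrow> bool" where
  "feasible M N Z L H S T0 \<longleftrightarrow> 0 < S \<and> ordered_subset (M*Z) T0 \<and> (\<exists>T. is_layers M N Z L H S T0 T)"

text \<open>Layer distance: largest l < L such that the vertical stack of H_{T_0},...,H_{T_(l-1)}
  has max column weight at most 1.  The layers are those associated with (S, T0)
  (unique, since H has no two identical rows).\<close>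
definition layer_distance :: "nat \<Rightarrow> nat \<Rightarrow> nat \<Rightarrow> nat \<Rightarrow> (nat \<Rightarrow> nat \<Rightarrow> int) \<Rightarrow> nat \<Rightarrow> nat list \<Rightarrow> nat" where
  "layer_distance M N Z L H S T0 =
     (let T = (SOME T. is_layers M N Z L H S T0 T) in
      GREATEST l. l < L \<and>
        omega (rows_sub H (concat (map T [0..<l]))) (length (concat (map T [0..<l]))) (N*Z) \<le> 1)"

definition Hsum :: "nat \<Rightarrow> (nat \<Rightarrow> nat \<Rightarrow> int) \<Rightarrow> nat \<Rightarrow> nat \<Rightarrow> (nat \<Rightarrow> nat \<Rightarrow> int)" where
  "Hsum Z H S k = (\<lambda>i c. \<Sum>t<k. phi Z (int (t*S)) H i c)"

end

theory Submission
  imports Defs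
begin

lemma omega_le_iff: "omega A nr nc \<le> m \<longleftrightarrow> (\<forall>j<nc. col_weight A nr j \<le> m)"
proof -
  have f: "finite ({0} \<union> {col_weight A nr j | j. j < nc})" by simp
  show ?thesis unfolding omega_def using Max_le_iff[OF f] by auto
qed

lemma omega_ge_iff: "1 \<le> omega A nr nc \<longleftrightarrow> (\<exists>j<nc. 1 \<le> col_weight A nr j)"
proof -
  have f: "finite ({0} \<union> {col_weight A nr j | j. j < nc})" by simp
  show ?thesis unfolding omega_def using Max_ge_iff[OF f] by auto
qed

lemma card_bin: "(\<forall>r<(n::nat). f r \<in> {0::int,1}) \<Longrightarrow> int (card {r. r < n \<and> f r \<noteq> 0}) = (\<Sum>r<n. f r)"
proof (induction n)
  case 0 then show ?case by simp
next
  case (Suc n)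
  have e: "{r. r < Suc n \<and> f r \<noteq> 0} = {r. r < n \<and> f r \<noteq> 0} \<union> (if f n \<noteq> 0 then {n} else {})" using less_Suc_eq by auto
  have "int (card {r. r < Suc n \<and> f r \<noteq> 0}) = int (card {r. r < n \<and> f r \<noteq> 0}) + (if f n \<noteq> 0 then 1 else 0)"
    unfolding e by (auto simp: card_insert_if)
  then show ?case using Suc by auto
qed

lemma count_concat: "length (filter P (concat (map T [0..<l]))) = (\<Sum>t<l. length (filter P (T t)))"
  by (induct l) auto

theorem theorem1:
  fixes M N Z L S k :: nat and H :: "nat \<Rightarrow> nat \<Rightarrow> int" and T0 :: "nat list"
  assumes "0 < M" and "0 < N" and "0 < Z" and "1 < L"
    and "qc_matrix M N Z H"
    and "feasible M N Z L H S T0"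
    and "1 \<le> k" and "k \<le> L - 1"
  shows "k \<le> layer_distance M N Z L H S T0 \<longleftrightarrow>
    ((\<forall>r<length T0. \<forall>c<N*Z. rows_sub (Hsum Z H S k) T0 r c \<in> {0,1}) \<and>
     omega (rows_sub (Hsum Z H S k) T0) (length T0) (N*Z) = 1)"
proof -
  note qc = assms(5)[unfolded qc_matrix_def]
  have kL: "k < L" using assms(4,8) by simp
  define T where "T = (SOME T. is_layers M N Z L H S T0 T)"
  have lay: "is_layers M N Z L H S T0 T"
    unfolding T_def using assms(6) unfolding feasible_def by (metis someI_ex)
  define n where "n = length T0"
  define xs where "xs l = concat (map T [0..<l])" for l
  have ld: "layer_distance M N Z L H S T0 = (GREATEST l. l < L \<and> omega (rows_sub H (xs l)) (length (xs l)) (N*Z) \<le> 1)"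
    by (simp add: layer_distance_def Let_def T_def xs_def)
  have T00: "T 0 = T0" using lay unfolding is_layers_def by simp
  have len: "\<And>t. t<L \<Longrightarrow> length (T t) = n" using lay unfolding is_layers_def n_def by simp
  have sub: "\<And>t. t<L \<Longrightarrow> set (T t) \<subseteq> {..<M*Z}" using lay unfolding is_layers_def ordered_subset_def by simp
  have eqH: "\<And>t r c. t<L \<Longrightarrow> r<n \<Longrightarrow> c<N*Z \<Longrightarrow> H (T t ! r) c = phi Z (int (t*S)) H (T0!r) c"
    using lay unfolding is_layers_def n_def rows_sub_def phi_def by simp
  have binH: "\<And>t r c. t<L \<Longrightarrow> r<n \<Longrightarrow> c<N*Z \<Longrightarrow> H (T t ! r) c \<in> {0,1}"
  proof -
    fix t r c assume "t<L" "r<n" "c<N*Z"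
    then have "T t ! r < M*Z" using sub len nth_mem by (metis lessThan_iff subsetD)
    then show "H (T t ! r) c \<in> {0,1}" using qc \<open>c<N*Z\<close> by blast
  qed
  have nn: "\<And>t r c. t<L \<Longrightarrow> r<n \<Longrightarrow> c<N*Z \<Longrightarrow> 0 \<le> H (T t ! r) c"
    using binH by fastforce
  have V: "\<And>r c. r<n \<Longrightarrow> c<N*Z \<Longrightarrow> rows_sub (Hsum Z H S k) T0 r c = (\<Sum>t<k. H (T t ! r) c)"
    unfolding rows_sub_def Hsum_def using eqH kL by simp
  have cwS: "\<And>l c. l \<le> L \<Longrightarrow> c<N*Z \<Longrightarrow>
     int (col_weight (rows_sub H (xs l)) (length (xs l)) c) = (\<Sum>t<l. \<Sum>r<n. H (T t ! r) c)"
  proof -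
    fix l c assume l: "l \<le> L" and c: "c<N*Z"
    have "col_weight (rows_sub H (xs l)) (length (xs l)) c = length (filter (\<lambda>x. H x c \<noteq> 0) (xs l))"
      unfolding col_weight_def rows_sub_def length_filter_conv_card by simp
    also have "\<dots> = (\<Sum>t<l. length (filter (\<lambda>x. H x c \<noteq> 0) (T t)))"
      unfolding xs_def count_concat ..
    finally have "int (col_weight (rows_sub H (xs l)) (length (xs l)) c) = (\<Sum>t<l. int (length (filter (\<lambda>x. H x c \<noteq> 0) (T t))))"
      by simp
    also have "\<dots> = (\<Sum>t<l. \<Sum>r<n. H (T t ! r) c)"
    proof (rule sum.cong)
      fix t assume "t \<in> {..<l}"
      then have t: "t < L" using l by simp
      have "length (filter (\<lambda>x. H x c \<noteq> 0) (T t)) = card {r. r < n \<and> H (T t ! r) c \<noteq> 0}"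
        unfolding length_filter_conv_card using len[OF t] by simp
      also have "int \<dots> = (\<Sum>r<n. H (T t ! r) c)"
        by (rule card_bin) (use binH t c in blast)
      finally show "int (length (filter (\<lambda>x. H x c \<noteq> 0) (T t))) = (\<Sum>r<n. H (T t ! r) c)" .
    qed simp
    finally show "int (col_weight (rows_sub H (xs l)) (length (xs l)) c) = (\<Sum>t<l. \<Sum>r<n. H (T t ! r) c)" .
  qed
  define Q where "Q l \<longleftrightarrow> l < L \<and> omega (rows_sub H (xs l)) (length (xs l)) (N*Z) \<le> 1" for l
  have Qiff: "\<And>l. l < L \<Longrightarrow> Q l \<longleftrightarrow> (\<forall>c<N*Z. (\<Sum>t<l. \<Sum>r<n. H (T t ! r) c) \<le> 1)"
  proof -
    fix l assume l: "l < L"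
    have "Q l \<longleftrightarrow> (\<forall>c<N*Z. col_weight (rows_sub H (xs l)) (length (xs l)) c \<le> 1)"
      unfolding Q_def omega_le_iff using l by simp
    also have "\<dots> \<longleftrightarrow> (\<forall>c<N*Z. (\<Sum>t<l. \<Sum>r<n. H (T t ! r) c) \<le> 1)"
      using cwS l by (metis less_imp_le of_nat_le_1_iff of_nat_1 of_nat_le_iff)
    finally show "Q l \<longleftrightarrow> (\<forall>c<N*Z. (\<Sum>t<l. \<Sum>r<n. H (T t ! r) c) \<le> 1)" .
  qed
  have Qdown: "\<And>l l'. Q l \<Longrightarrow> l' \<le> l \<Longrightarrow> Q l'"
  proof -
    fix l l' assume q: "Q l" and ll: "l' \<le> l"
    have l: "l < L" using q Q_def by simp
    have "\<forall>c<N*Z. (\<Sum>t<l'. \<Sum>r<n. H (T t ! r) c) \<le> 1"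
    proof (intro allI impI)
      fix c assume c: "c < N*Z"
      have "(\<Sum>t<l'. \<Sum>r<n. H (T t ! r) c) \<le> (\<Sum>t<l. \<Sum>r<n. H (T t ! r) c)"
        by (rule sum_mono2) (use ll l nn c in \<open>auto intro!: sum_nonneg\<close>)
      also have "\<dots> \<le> 1" using q Qiff l c by blast
      finally show "(\<Sum>t<l'. \<Sum>r<n. H (T t ! r) c) \<le> 1" .
    qed
    then show "Q l'" using Qiff ll l by simp
  qed
  have Q0: "Q 0" using Qiff assms(4) by simp
  have Qb: "\<And>y. Q y \<Longrightarrow> y \<le> L" using Q_def by simp
  have Qfun: "Q = (\<lambda>l. l < L \<and> omega (rows_sub H (xs l)) (length (xs l)) (N*Z) \<le> 1)"
    by (rule ext) (simp add: Q_def)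
  have ldQ: "layer_distance M N Z L H S T0 = Greatest Q" unfolding ld Qfun ..
  have "k \<le> layer_distance M N Z L H S T0 \<longleftrightarrow> Q k"
  proof
    assume "k \<le> layer_distance M N Z L H S T0"
    moreover have "Q (Greatest Q)" by (rule GreatestI_nat[of Q 0 L, OF Q0 Qb])
    ultimately show "Q k" using Qdown ldQ by metis
  next
    assume "Q k"
    then show "k \<le> layer_distance M N Z L H S T0"
      using Greatest_le_nat[of Q k L, OF _ Qb] ldQ by simp
  qed
  also have "Q k \<longleftrightarrow> (\<forall>c<N*Z. (\<Sum>t<k. \<Sum>r<n. H (T t ! r) c) \<le> 1)" using Qiff kL by simp
  also have "\<dots> \<longleftrightarrow> ((\<forall>r<length T0. \<forall>c<N*Z. rows_sub (Hsum Z H S k) T0 r c \<in> {0,1}) \<and>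
     omega (rows_sub (Hsum Z H S k) T0) (length T0) (N*Z) = 1)"
  proof -
    define Vf where "Vf = rows_sub (Hsum Z H S k) T0"
    have sw: "\<And>c. c < N*Z \<Longrightarrow> (\<Sum>t<k. \<Sum>r<n. H (T t ! r) c) = (\<Sum>r<n. Vf r c)"
      unfolding Vf_def using V by (simp add: sum.swap[of _ "{..<k}"])
    have Vnn: "\<And>r c. r<n \<Longrightarrow> c<N*Z \<Longrightarrow> 0 \<le> Vf r c"
      unfolding Vf_def using V nn kL by (auto intro!: sum_nonneg)
    have cwV: "\<And>c. c<N*Z \<Longrightarrow> (\<forall>r<n. Vf r c \<in> {0,1}) \<Longrightarrow> int (col_weight Vf n c) = (\<Sum>r<n. Vf r c)"
      unfolding col_weight_def by (rule card_bin) blast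
    have npos: "0 < n"
    proof (rule ccontr)
      assume "\<not> 0 < n"
      then have "\<forall>l<L. set (T l) = {}" using len by auto
      then have "(\<Union>l<L. set (T l)) = {}" by auto
      moreover have "(\<Union>l<L. set (T l)) = {..<M*Z}" using lay unfolding is_layers_def by simp
      moreover have "0 < M*Z" using assms(1,3) by simp
      ultimately show False by (metis lessThan_iff empty_iff)
    qed
    show ?thesis unfolding Vf_def[symmetric] n_def[symmetric]
    proof
      assume A: "\<forall>c<N * Z. (\<Sum>t<k. \<Sum>r<n. H (T t ! r) c) \<le> 1"
      have bin: "\<forall>r<n. \<forall>c<N*Z. Vf r c \<in> {0,1}"
      proof (intro allI impI)
        fix r c assume r: "r<n" and c: "c<N*Z"
        have "Vf r c \<le> (\<Sum>r<n. Vf r c)"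
          by (rule member_le_sum) (use r c Vnn in auto)
        also have "\<dots> \<le> 1" using A sw c by simp
        finally show "Vf r c \<in> {0,1}" using Vnn[OF r c] by auto
      qed
      moreover have "omega Vf n (N*Z) \<le> 1"
        unfolding omega_le_iff using cwV bin A sw
        by (metis of_nat_le_1_iff of_nat_1 of_nat_le_iff)
      moreover have "1 \<le> omega Vf n (N*Z)"
        unfolding omega_ge_iff
      proof -
        have "T0 ! 0 < M*Z" using assms(6) npos unfolding feasible_def ordered_subset_def n_def
          by (metis lessThan_iff nth_mem subsetD)
        then obtain j where j: "j < N*Z" "H (T0!0) j \<noteq> 0" using qc by blast
        then have "H (T 0 ! 0) j = 1" using binH[OF _ npos j(1)] T00 assms(4) by fastforce
        have "H (T 0 ! 0) j \<le> Vf 0 j" unfolding Vf_def V[OF npos j(1)]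
          by (rule member_le_sum) (use assms(7) kL nn npos j in auto)
        also have "\<dots> \<le> (\<Sum>r<n. Vf r j)"
          by (rule member_le_sum) (use npos j Vnn in auto)
        finally have "1 \<le> int (col_weight Vf n j)"
          using cwV[OF j(1)] bin j(1) \<open>H (T 0 ! 0) j = 1\<close> by simp
        then show "\<exists>j<N*Z. 1 \<le> col_weight Vf n j" using j(1) by auto
      qed
      ultimately show "(\<forall>r<n. \<forall>c<N*Z. Vf r c \<in> {0,1}) \<and> omega Vf n (N*Z) = 1"
        using bin by simp
    next
      assume B: "(\<forall>r<n. \<forall>c<N*Z. Vf r c \<in> {0,1}) \<and> omega Vf n (N*Z) = 1"
      show "\<forall>c<N * Z. (\<Sum>t<k. \<Sum>r<n. H (T t ! r) c) \<le> 1"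
      proof (intro allI impI)
        fix c assume c: "c < N*Z"
        have "col_weight Vf n c \<le> 1" using B c omega_le_iff by (metis order_refl)
        then show "(\<Sum>t<k. \<Sum>r<n. H (T t ! r) c) \<le> 1" using sw[OF c] cwV[OF c] B c by simp
      qed
    qed
  qed
  finally show ?thesis .
qed

end
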